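(* Let $p(x)=x^3-a_2x^2+a_1x-a_0$ with real coefficients $a_0,a_1,a_2>0$, and let $\alpha=\min\{a_2,a_0/a_1\}$ and $\beta=\max\{a_2,a_0/a_1\}$. Then $p(x)<0$ for all $x\in(0,\alpha)$ and $p(x)>0$ for all $x>\beta$. *)

theory Defs
  imports Complex_Main
begin

end

theory Submission
  imports Defs
begin

theorem lemma2:
  fixes a0 a1 a2 :: real
  assumes "a0 > 0" "a1 > 0" "a2 > 0"
  defines "p \<equiv> (\<lambda>x::real. x ^ 3 - a2 * x ^ 2 + a1 * x - a0)"
    and "\<alpha> \<equiv> min a2 (a0 / a1)"
    and "\<beta> \<equiv> max a2 (a0 / a1)"
  shows "(\<forall>x. 0 < x \<and> x < \<alpha> \<longrightarrow> p x < 0) \<and> (\<forall>x. x > \<beta> \<longrightarrow> p x > 0)"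
proof (intro conjI allI impI)
  have e: "p x = x^2 * (x - a2) + (a1 * x - a0)" for x
    unfolding p_def by (simp add: power2_eq_square power3_eq_cube algebra_simps)
  fix x assume h: "0 < x \<and> x < \<alpha>"
  hence "x < a2" "x < a0 / a1" using \<alpha>_def by auto
  hence "a1 * x < a0" using assms(2) by (simp add: pos_less_divide_eq mult.commute)
  moreover have "x^2 * (x - a2) < 0" using h \<open>x < a2\<close> by (simp add: mult_pos_neg)
  ultimately show "p x < 0" using e by simp
next
  have e: "p x = x^2 * (x - a2) + (a1 * x - a0)" for x
    unfolding p_def by (simp add: power2_eq_square power3_eq_cube algebra_simps)
  fix x assume h: "x > \<beta>"
  hence "x > a2" "x > a0 / a1" using \<beta>_def by auto
  hence "a1 * x > a0" using assms(2) by (simp add: pos_divide_less_eq mult.commute)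
  moreover have "x > 0" using \<open>x > a2\<close> assms by simp
  hence "x^2 * (x - a2) > 0" using \<open>x > a2\<close> by simp
  ultimately show "p x > 0" using e by simp
qed

end
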